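(* Let $\sigma(x,y)=(x\rightharpoonup y,x\leftharpoonup y)$ be an involutive non-degenerate quiver-theoretic Yang--Baxter map on a quiver $\mathscr{A}$ over $\Lambda$. Define $x\star y:=(x\rightharpoonup\cdot)^{-1}(y)$ for $\mathfrak{s}(x)=\mathfrak{s}(y)$, $x\bullet y:=(\cdot\leftharpoonup x)^{-1}(y)$ for $\mathfrak{t}(x)=\mathfrak{t}(y)$, and $x\,\tilde\star\,y:=y\bullet x$. Then $(\mathscr{A},\star,\tilde\star)$ is a weak RLC-system.
   Context: A quiver-theoretic Yang--Baxter map is a source/target-preserving map $\sigma$ on composable pairs $\mathscr{A}\otimes\mathscr{A}$ satisfying the braid relation; involutive: $\sigma^2=\mathrm{id}$; non-degenerate: all maps $x\rightharpoonup\cdot\colon\mathscr{A}(\mathfrak{t}(x),\Lambda)\to\mathscr{A}(\mathfrak{s}(x),\Lambda)$ and $\cdot\leftharpoonup y\colon\mathscr{A}(\Lambda,\mathfrak{s}(y))\to\mathscr{A}(\Lambda,\mathfrak{t}(y))$ are bijective. A weak RC-system $(Q,\star)$: partial operation with $x\star y$ defined only if $\mathfrak{s}(x)=\mathfrak{s}(y)$; if $x\star y$ is defined so is $y\star x$, with $\mathfrak{s}(x\star y)=\mathfrak{t}(x)$, $\mathfrak{s}(y\star x)=\mathfrak{t}(y)$, $\mathfrak{t}(x\star y)=\mathfrak{t}(y\star x)$; and if $x\star y$, $x\star z$, $(x\star y)\star(x\star z)$ are defined then $y\star z$, $(y\star x)\star(y\star z)$ are defined and $(x\star y)\star(x\star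 z)=(y\star x)\star(y\star z)$. A weak co-RC-system $(Q,\bullet)$: $x\bullet y$ defined only if $\mathfrak{t}(x)=\mathfrak{t}(y)$; if defined, $y\bullet x$ is defined with $\mathfrak{t}(x\bullet y)=\mathfrak{s}(x)$, $\mathfrak{t}(y\bullet x)=\mathfrak{s}(y)$, $\mathfrak{s}(x\bullet y)=\mathfrak{s}(y\bullet x)$; and the same law $(x\bullet y)\bullet(x\bullet z)=(y\bullet x)\bullet(y\bullet z)$ with the same definedness clause. A weak LC-system $(Q,\tilde\star)$ is one such that $x\bullet y:=y\,\tilde\star\,x$ makes $(Q,\bullet)$ a weak co-RC-system. A weak RLC-system $(Q,\star,\tilde\star)$ is such that $(Q,\star)$ is a weak RC-system, $(Q,\tilde\star)$ a weak LC-system, and: if $x\star y$ is defined then $(y\star x)\,\tilde\star\,(x\star y)$ is defined and equals $x$; if $x\,\tilde\star\,y$ is defined then $(y\,\tilde\star\,x)\star(x\,\tilde\star\,y)$ is defined and equals $x$. *)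

theory Defs
  imports Main
begin

text \<open>A quiver: a set of arrows A with source map s and target map t into the
vertex type 'v (playing the role of \<Lambda>).  A map sigma on composable pairs is given by its two components
lact x y = x \<rightharpoonup> y and ract x y = x \<leftharpoonup> y.  Partial binary operations are
modelled as functions into option: op x y = None means "undefined".\<close>

definition YB_sigma :: "('a \<Rightarrow> 'a \<Rightarrow> 'a) \<Rightarrow> ('a \<Rightarrow> 'a \<Rightarrow> 'a) \<Rightarrow> 'a \<times> 'a \<Rightarrow> 'a \<times> 'a" where
  "YB_sigma lact ract p = (lact (fst p) (snd p), ract (fst p) (snd p))"

definition sig12 :: "('a \<times> 'a \<Rightarrow> 'a \<times> 'a) \<Rightarrow> 'a \<times> 'a \<times> 'a \<Rightarrow> 'a \<times> 'a \<times> 'a" where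
  "sig12 f q = (case q of (x, y, z) \<Rightarrow> (case f (x, y) of (a, b) \<Rightarrow> (a, b, z)))"

definition sig23 :: "('a \<times> 'a \<Rightarrow> 'a \<times> 'a) \<Rightarrow> 'a \<times> 'a \<times> 'a \<Rightarrow> 'a \<times> 'a \<times> 'a" where
  "sig23 f q = (case q of (x, y, z) \<Rightarrow> (case f (y, z) of (b, c) \<Rightarrow> (x, b, c)))"

definition quiver_YB_map ::
  "'a set \<Rightarrow> ('a \<Rightarrow> 'v) \<Rightarrow> ('a \<Rightarrow> 'v) \<Rightarrow> ('a \<Rightarrow> 'a \<Rightarrow> 'a) \<Rightarrow> ('a \<Rightarrow> 'a \<Rightarrow> 'a) \<Rightarrow> bool" where
  "quiver_YB_map A s t lact ract \<longleftrightarrow>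
     (\<forall>x\<in>A. \<forall>y\<in>A. t x = s y \<longrightarrow>
        lact x y \<in> A \<and> ract x y \<in> A \<and>
        s (lact x y) = s x \<and> t (lact x y) = s (ract x y) \<and> t (ract x y) = t y) \<and>
     (\<forall>x\<in>A. \<forall>y\<in>A. \<forall>z\<in>A. t x = s y \<longrightarrow> t y = s z \<longrightarrow>
        sig12 (YB_sigma lact ract) (sig23 (YB_sigma lact ract) (sig12 (YB_sigma lact ract) (x, y, z)))
      = sig23 (YB_sigma lact ract) (sig12 (YB_sigma lact ract) (sig23 (YB_sigma lact ract) (x, y, z))))"

definition YB_involutive ::
  "'a set \<Rightarrow> ('a \<Rightarrow> 'v) \<Rightarrow> ('a \<Rightarrow> 'v) \<Rightarrow> ('a \<Rightarrow> 'a \<Rightarrow> 'a) \<Rightarrow> ('a \<Rightarrow> 'a \<Rightarrow> 'a) \<Rightarrow> bool" where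
  "YB_involutive A s t lact ract \<longleftrightarrow>
     (\<forall>x\<in>A. \<forall>y\<in>A. t x = s y \<longrightarrow>
        YB_sigma lact ract (YB_sigma lact ract (x, y)) = (x, y))"

definition YB_nondegenerate ::
  "'a set \<Rightarrow> ('a \<Rightarrow> 'v) \<Rightarrow> ('a \<Rightarrow> 'v) \<Rightarrow> ('a \<Rightarrow> 'a \<Rightarrow> 'a) \<Rightarrow> ('a \<Rightarrow> 'a \<Rightarrow> 'a) \<Rightarrow> bool" where
  "YB_nondegenerate A s t lact ract \<longleftrightarrow>
     (\<forall>x\<in>A. bij_betw (lact x) {y\<in>A. s y = t x} {y\<in>A. s y = s x}) \<and>
     (\<forall>y\<in>A. bij_betw (\<lambda>x. ract x y) {x\<in>A. t x = s y} {x\<in>A. t x = t y})"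

definition YB_star ::
  "'a set \<Rightarrow> ('a \<Rightarrow> 'v) \<Rightarrow> ('a \<Rightarrow> 'v) \<Rightarrow> ('a \<Rightarrow> 'a \<Rightarrow> 'a) \<Rightarrow> 'a \<Rightarrow> 'a \<Rightarrow> 'a option" where
  "YB_star A s t lact x y =
     (if x \<in> A \<and> y \<in> A \<and> s x = s y
      then Some (the_inv_into {z\<in>A. s z = t x} (lact x) y) else None)"

definition YB_bullet ::
  "'a set \<Rightarrow> ('a \<Rightarrow> 'v) \<Rightarrow> ('a \<Rightarrow> 'v) \<Rightarrow> ('a \<Rightarrow> 'a \<Rightarrow> 'a) \<Rightarrow> 'a \<Rightarrow> 'a \<Rightarrow> 'a option" where
  "YB_bullet A s t ract x y =
     (if x \<in> A \<and> y \<in> A \<and> t x = t y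
      then Some (the_inv_into {z\<in>A. t z = s x} (\<lambda>z. ract z x) y) else None)"

definition YB_tstar ::
  "'a set \<Rightarrow> ('a \<Rightarrow> 'v) \<Rightarrow> ('a \<Rightarrow> 'v) \<Rightarrow> ('a \<Rightarrow> 'a \<Rightarrow> 'a) \<Rightarrow> 'a \<Rightarrow> 'a \<Rightarrow> 'a option" where
  "YB_tstar A s t ract x y = YB_bullet A s t ract y x"

definition weak_RC_system ::
  "'a set \<Rightarrow> ('a \<Rightarrow> 'v) \<Rightarrow> ('a \<Rightarrow> 'v) \<Rightarrow> ('a \<Rightarrow> 'a \<Rightarrow> 'a option) \<Rightarrow> bool" where
  "weak_RC_system Q s t op \<longleftrightarrow>
     (\<forall>x y u. op x y = Some u \<longrightarrow> x \<in> Q \<and> y \<in> Q \<and> u \<in> Q \<and> s x = s y) \<and>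
     (\<forall>x y u. op x y = Some u \<longrightarrow>
        (\<exists>v. op y x = Some v \<and> s u = t x \<and> s v = t y \<and> t u = t v)) \<and>
     (\<forall>x y z a b c. op x y = Some a \<longrightarrow> op x z = Some b \<longrightarrow> op a b = Some c \<longrightarrow>
        (\<exists>d e. op y z = Some e \<and> op y x = Some d \<and> op d e = Some c))"

definition weak_coRC_system ::
  "'a set \<Rightarrow> ('a \<Rightarrow> 'v) \<Rightarrow> ('a \<Rightarrow> 'v) \<Rightarrow> ('a \<Rightarrow> 'a \<Rightarrow> 'a option) \<Rightarrow> bool" where
  "weak_coRC_system Q s t op \<longleftrightarrow>
     (\<forall>x y u. op x y = Some u \<longrightarrow> x \<in> Q \<and> y \<in> Q \<and> u \<in> Q \<and> t x = t y) \<and>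
     (\<forall>x y u. op x y = Some u \<longrightarrow>
        (\<exists>v. op y x = Some v \<and> t u = s x \<and> t v = s y \<and> s u = s v)) \<and>
     (\<forall>x y z a b c. op x y = Some a \<longrightarrow> op x z = Some b \<longrightarrow> op a b = Some c \<longrightarrow>
        (\<exists>d e. op y z = Some e \<and> op y x = Some d \<and> op d e = Some c))"

definition weak_LC_system ::
  "'a set \<Rightarrow> ('a \<Rightarrow> 'v) \<Rightarrow> ('a \<Rightarrow> 'v) \<Rightarrow> ('a \<Rightarrow> 'a \<Rightarrow> 'a option) \<Rightarrow> bool" where
  "weak_LC_system Q s t op \<longleftrightarrow> weak_coRC_system Q s t (\<lambda>x y. op y x)"

definition weak_RLC_system ::
  "'a set \<Rightarrow> ('a \<Rightarrow> 'v) \<Rightarrow> ('a \<Rightarrow> 'v) \<Rightarrow> ('a \<Rightarrow> 'a \<Rightarrow> 'a option) \<Rightarrow> ('a \<Rightarrow> 'a \<Rightarrow> 'a option) \<Rightarrow> bool" where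
  "weak_RLC_system Q s t star tstar \<longleftrightarrow>
     weak_RC_system Q s t star \<and> weak_LC_system Q s t tstar \<and>
     (\<forall>x y u. star x y = Some u \<longrightarrow>
        (\<exists>v. star y x = Some v \<and> tstar v u = Some x)) \<and>
     (\<forall>x y u. tstar x y = Some u \<longrightarrow>
        (\<exists>v. tstar y x = Some v \<and> star v u = Some x))"

end

theory Submission
  imports Defs
begin

locale yb_ctx =
  fixes A :: "'a set" and s t :: "'a \<Rightarrow> 'v" and lact ract :: "'a \<Rightarrow> 'a \<Rightarrow> 'a"
  assumes Q: "quiver_YB_map A s t lact ract"
    and I: "YB_involutive A s t lact ract"
    and N: "YB_nondegenerate A s t lact ract"
begin

lemma cl:
  assumes "x \<in> A" "y \<in> A" "t x = s y"
  shows "lact x y \<in> A" "ract x y \<in> A" "s (lact x y) = s x"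
    "t (lact x y) = s (ract x y)" "t (ract x y) = t y"
  using Q assms unfolding quiver_YB_map_def by auto

lemma inv:
  assumes "x \<in> A" "y \<in> A" "t x = s y"
  shows "lact (lact x y) (ract x y) = x" "ract (lact x y) (ract x y) = y"
  using I assms unfolding YB_involutive_def YB_sigma_def by auto

lemma braid:
  assumes "x \<in> A" "y \<in> A" "z \<in> A" "t x = s y" "t y = s z"
  shows "lact x (lact y z) = lact (lact x y) (lact (ract x y) z)"
    "ract (ract x y) z = ract (ract x (lact y z)) (ract y z)"
proof -
  have "sig12 (YB_sigma lact ract) (sig23 (YB_sigma lact ract) (sig12 (YB_sigma lact ract) (x, y, z)))
      = sig23 (YB_sigma lact ract) (sig12 (YB_sigma lact ract) (sig23 (YB_sigma lact ract) (x, y, z)))"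
    using Q assms unfolding quiver_YB_map_def by blast
  then show "lact x (lact y z) = lact (lact x y) (lact (ract x y) z)"
    "ract (ract x y) z = ract (ract x (lact y z)) (ract y z)"
    unfolding sig12_def sig23_def YB_sigma_def by simp_all
qed

lemma star_some:
  "YB_star A s t lact x y = Some c \<longleftrightarrow>
     (x \<in> A \<and> y \<in> A \<and> s x = s y \<and> c \<in> A \<and> s c = t x \<and> lact x c = y)"
proof
  assume h: "YB_star A s t lact x y = Some c"
  then have x: "x \<in> A" "y \<in> A" "s x = s y" unfolding YB_star_def by (auto split: if_splits)
  with h have c: "c = the_inv_into {z\<in>A. s z = t x} (lact x) y" unfolding YB_star_def by auto
  have b: "bij_betw (lact x) {z\<in>A. s z = t x} {z\<in>A. s z = s x}" using N x unfolding YB_nondegenerate_def by auto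
  have yy: "y \<in> {z\<in>A. s z = s x}" using x by auto
  have "c \<in> {z\<in>A. s z = t x}" using c the_inv_into_into[OF bij_betw_imp_inj_on[OF b]] yy
    bij_betw_imp_surj_on[OF b] by auto
  moreover have "lact x c = y" using c f_the_inv_into_f_bij_betw[OF b] yy by auto
  ultimately show "x \<in> A \<and> y \<in> A \<and> s x = s y \<and> c \<in> A \<and> s c = t x \<and> lact x c = y" using x by auto
next
  assume h: "x \<in> A \<and> y \<in> A \<and> s x = s y \<and> c \<in> A \<and> s c = t x \<and> lact x c = y"
  have b: "bij_betw (lact x) {z\<in>A. s z = t x} {z\<in>A. s z = s x}" using N h unfolding YB_nondegenerate_def by auto
  have "the_inv_into {z\<in>A. s z = t x} (lact x) y = c"
    using the_inv_into_f_f[OF bij_betw_imp_inj_on[OF b], of c] h by auto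
  then show "YB_star A s t lact x y = Some c" using h unfolding YB_star_def by auto
qed

lemma bullet_some:
  "YB_bullet A s t ract x y = Some c \<longleftrightarrow>
     (x \<in> A \<and> y \<in> A \<and> t x = t y \<and> c \<in> A \<and> t c = s x \<and> ract c x = y)"
proof
  assume h: "YB_bullet A s t ract x y = Some c"
  then have x: "x \<in> A" "y \<in> A" "t x = t y" unfolding YB_bullet_def by (auto split: if_splits)
  with h have c: "c = the_inv_into {z\<in>A. t z = s x} (\<lambda>z. ract z x) y" unfolding YB_bullet_def by auto
  have b: "bij_betw (\<lambda>z. ract z x) {z\<in>A. t z = s x} {z\<in>A. t z = t x}" using N x unfolding YB_nondegenerate_def by auto
  have yy: "y \<in> {z\<in>A. t z = t x}" using x by auto
  have "c \<in> {z\<in>A. t z = s x}" using c the_inv_into_into[OF bij_betw_imp_inj_on[OF b]] yy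
    bij_betw_imp_surj_on[OF b] by auto
  moreover have "ract c x = y" using c f_the_inv_into_f_bij_betw[OF b] yy by auto
  ultimately show "x \<in> A \<and> y \<in> A \<and> t x = t y \<and> c \<in> A \<and> t c = s x \<and> ract c x = y" using x by auto
next
  assume h: "x \<in> A \<and> y \<in> A \<and> t x = t y \<and> c \<in> A \<and> t c = s x \<and> ract c x = y"
  have b: "bij_betw (\<lambda>z. ract z x) {z\<in>A. t z = s x} {z\<in>A. t z = t x}" using N h unfolding YB_nondegenerate_def by auto
  have "the_inv_into {z\<in>A. t z = s x} (\<lambda>z. ract z x) y = c"
    using the_inv_into_f_f[OF bij_betw_imp_inj_on[OF b], of c] h by auto
  then show "YB_bullet A s t ract x y = Some c" using h unfolding YB_bullet_def by auto
qed

lemma RC: "weak_RC_system A s t (YB_star A s t lact)"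
  unfolding weak_RC_system_def
proof (intro conjI; (intro allI impI)?)
  fix x y u assume "YB_star A s t lact x y = Some u"
  then show "x \<in> A \<and> y \<in> A \<and> u \<in> A \<and> s x = s y" by (simp add: star_some)
next
  fix x y u assume "YB_star A s t lact x y = Some u"
  then have h: "x \<in> A" "y \<in> A" "s x = s y" "u \<in> A" "s u = t x" "lact x u = y" by (simp_all add: star_some)
  show "\<exists>v. YB_star A s t lact y x = Some v \<and> s u = t x \<and> s v = t y \<and> t u = t v"
    apply (rule exI[of _ "ract x u"])
    using h cl[of x u] inv[of x u] by (auto simp: star_some)
next
  fix x y z a b c
  assume h1: "YB_star A s t lact x y = Some a" and h2: "YB_star A s t lact x z = Some b"
    and h3: "YB_star A s t lact a b = Some c"
  have a: "x \<in> A" "y \<in> A" "s x = s y" "a \<in> A" "s a = t x" "lact x a = y" using h1 by (simp_all add: star_some)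
  have b: "z \<in> A" "s x = s z" "b \<in> A" "s b = t x" "lact x b = z" using h2 by (simp_all add: star_some)
  have c: "s a = s b" "c \<in> A" "s c = t a" "lact a c = b" using h3 by (simp_all add: star_some)
  define d where "d = ract x a"
  define e where "e = lact d c"
  have d: "d \<in> A" "s d = t y" "t d = t a" "lact y d = x"
    using cl[of x a] inv[of x a] a unfolding d_def by auto
  have br: "z = lact y e" using braid(1)[of x a c] a b c unfolding e_def d_def by auto
  have e: "e \<in> A" "s e = t y" using cl[of d c] d c unfolding e_def by auto
  show "\<exists>d e. YB_star A s t lact y z = Some e \<and> YB_star A s t lact y x = Some d \<and>
          YB_star A s t lact d e = Some c"
    apply (rule exI[of _ d], rule exI[of _ e])
    using a b c d e br by (auto simp: star_some e_def)
qed

lemma coRC: "weak_coRC_system A s t (YB_bullet A s t ract)"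
  unfolding weak_coRC_system_def
proof (intro conjI; (intro allI impI)?)
  fix x y u assume "YB_bullet A s t ract x y = Some u"
  then show "x \<in> A \<and> y \<in> A \<and> u \<in> A \<and> t x = t y" by (simp add: bullet_some)
next
  fix x y u assume "YB_bullet A s t ract x y = Some u"
  then have h: "x \<in> A" "y \<in> A" "t x = t y" "u \<in> A" "t u = s x" "ract u x = y" by (simp_all add: bullet_some)
  show "\<exists>v. YB_bullet A s t ract y x = Some v \<and> t u = s x \<and> t v = s y \<and> s u = s v"
    apply (rule exI[of _ "lact u x"])
    using h cl[of u x] inv[of u x] by (auto simp: bullet_some)
next
  fix x y z a b c
  assume h1: "YB_bullet A s t ract x y = Some a" and h2: "YB_bullet A s t ract x z = Some b"
    and h3: "YB_bullet A s t ract a b = Some c"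
  have a: "x \<in> A" "y \<in> A" "t x = t y" "a \<in> A" "t a = s x" "ract a x = y" using h1 by (simp_all add: bullet_some)
  have b: "z \<in> A" "t x = t z" "b \<in> A" "t b = s x" "ract b x = z" using h2 by (simp_all add: bullet_some)
  have c: "t a = t b" "c \<in> A" "t c = s a" "ract c a = b" using h3 by (simp_all add: bullet_some)
  define d where "d = lact a x"
  define e where "e = ract c d"
  have d: "d \<in> A" "t d = s y" "s d = s a" "ract d y = x"
    using cl[of a x] inv[of a x] a unfolding d_def by auto
  have br: "z = ract e y" using braid(2)[of c a x] a b c unfolding e_def d_def by auto
  have e: "e \<in> A" "t e = s y" using cl[of c d] d c unfolding e_def by auto
  show "\<exists>d e. YB_bullet A s t ract y z = Some e \<and> YB_bullet A s t ract y x = Some d \<and>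
          YB_bullet A s t ract d e = Some c"
    apply (rule exI[of _ d], rule exI[of _ e])
    using a b c d e br by (auto simp: bullet_some e_def)
qed

lemma RLC: "weak_RLC_system A s t (YB_star A s t lact) (YB_tstar A s t ract)"
  unfolding weak_RLC_system_def
proof (intro conjI; (intro allI impI)?)
  show "weak_RC_system A s t (YB_star A s t lact)" by (rule RC)
  show "weak_LC_system A s t (YB_tstar A s t ract)"
    unfolding weak_LC_system_def YB_tstar_def using coRC by simp
next
  fix x y u assume "YB_star A s t lact x y = Some u"
  then have h: "x \<in> A" "y \<in> A" "s x = s y" "u \<in> A" "s u = t x" "lact x u = y" by (simp_all add: star_some)
  show "\<exists>v. YB_star A s t lact y x = Some v \<and> YB_tstar A s t ract v u = Some x"
    apply (rule exI[of _ "ract x u"])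
    using h cl[of x u] inv[of x u] by (auto simp: star_some bullet_some YB_tstar_def)
next
  fix x y u assume "YB_tstar A s t ract x y = Some u"
  then have h: "y \<in> A" "x \<in> A" "t y = t x" "u \<in> A" "t u = s y" "ract u y = x"
    by (simp_all add: bullet_some YB_tstar_def)
  show "\<exists>v. YB_tstar A s t ract y x = Some v \<and> YB_star A s t lact v u = Some x"
    apply (rule exI[of _ "lact u y"])
    using h cl[of u y] inv[of u y] by (auto simp: star_some bullet_some YB_tstar_def)
qed

end

theorem proposition5p3:
  fixes A :: "'a set" and s t :: "'a \<Rightarrow> 'v" and lact ract :: "'a \<Rightarrow> 'a \<Rightarrow> 'a"
  assumes "quiver_YB_map A s t lact ract"
    and "YB_involutive A s t lact ract"
    and "YB_nondegenerate A s t lact ract"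
  shows "weak_RLC_system A s t (YB_star A s t lact) (YB_tstar A s t ract)"
proof -
  interpret yb_ctx A s t lact ract using assms by unfold_locales
  show ?thesis by (rule RLC)
qed

end
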